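(* Let $E=\mathbb{N}=\{0,1,2,\dots\}$ with the discrete topology, $\rho(n)=e^{n^2}$, and fix $\alpha>1$. For $t\ge0$ define transition probabilities $p_{i,j}(t)$ by: $p_{0,0}(t)=1$; for even $n\ge2$, $p_{n,n}(t)=e^{-(n-1)^\alpha t}$, $p_{n,0}(t)=1-e^{-(n-1)^\alpha t}$; for odd $n$, $p_{n,n}(t)=e^{-n^\alpha t}$, $p_{n,n+1}(t)=e^{-n}n^\alpha t e^{-n^\alpha t}$, $p_{n,0}(t)=1-e^{-n^\alpha t}-e^{-n}n^\alpha te^{-n^\alpha t}$; all other $p_{i,j}(t)=0$ (these are the transition probabilities $e^{tA}$ of the continuous-time Markov chain with rates $a_{n,n+1}=n^\alpha e^{-n}$, $a_{n,n}=-n^\alpha$, $a_{n,0}=n^\alpha(1-e^{-n})$ for odd $n$, and $a_{n,n}=-(n-1)^\alpha$, $a_{n,0}=(n-1)^\alpha$ for even $n$). Set $P(t)f(n):=\sum_j p_{n,j}(t)f(j)$. Then each $P(t)$ is a well-defined bounded linear operator on $\mathscr{B}^\rho(\mathbb{N})$, and for odd $n$ $$P(t)\rho(n)=\rho(n)e^{-n^\alpha t}+\rho(n+1)n^\alpha te^{-n^\alpha t}e^{-n}+\rho(0)\big(1-e^{-n^\alpha t}-e^{-n}n^\alpha te^{-n^\alpha t}\big).$$ The family $(P(t))_{t\ge0}$ satisfies conditions (P1), (P2), (P3), (P5) of a generalized Feller semigroup, but $\|P(t)\|_{L(\mathscr{B}^\rho(\mathbb{N}))}\to\infty$ as $t\downarrow0$;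 in particular (P4) fails and $(P(t))$ is not strongly continuous on $\mathscr{B}^\rho(\mathbb{N})$.
   Context: For a weighted space $(E,\rho)$ and $f:E\to\mathbb{R}$ put $\|f\|_\rho:=\sup_{x\in E}|f(x)|/\rho(x)$; $\mathscr{B}^\rho(E)$ denotes the closure of $C_b(E)$ with respect to $\|\cdot\|_\rho$ inside $\{f:\|f\|_\rho<\infty\}$ (for discrete $\mathbb{N}$ and $\rho(n)=e^{n^2}$ these are the functions with $f(n)/\rho(n)\to0$). The conditions are: (P1) $P(0)=\mathrm{Id}$; (P2) $P(t+s)=P(s)P(t)$ for all $s,t\ge0$; (P3) $\lim_{t\downarrow0}P(t)f(x)=f(x)$ for all $f\in\mathscr{B}^\rho(E)$, $x\in E$; (P4) there exist $\varepsilon>0$, $C<\infty$ with $\|P(t)\|_{L(\mathscr{B}^\rho(E))}\le C$ for all $t\in[0,\varepsilon]$; (P5) each $P(t)$ is a positive operator. Strong continuity means $\|P(t)f-f\|_\rho\to0$ as $t\downarrow0$ for every $f\in\mathscr{B}^\rho(E)$. *)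

theory Defs
  imports "HOL-Analysis.Analysis"
begin

text \<open>Weighted sup-norm  sup_x |f x| / rho x  (meaningful when the quotient is bounded).\<close>
definition rho_bdd :: "('a \<Rightarrow> real) \<Rightarrow> ('a \<Rightarrow> real) \<Rightarrow> bool" where
  "rho_bdd \<rho> f \<longleftrightarrow> bdd_above (range (\<lambda>x. \<bar>f x\<bar> / \<rho> x))"

definition rho_norm :: "('a \<Rightarrow> real) \<Rightarrow> ('a \<Rightarrow> real) \<Rightarrow> real" where
  "rho_norm \<rho> f = (SUP x. \<bar>f x\<bar> / \<rho> x)"

definition B_rho :: "('a::topological_space \<Rightarrow> real) \<Rightarrow> ('a \<Rightarrow> real) set" where
  "B_rho \<rho> = {f. rho_bdd \<rho> f \<and>
     (\<forall>e>0. \<exists>g. continuous_on UNIV g \<and> bounded (range g) \<and>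
          rho_bdd \<rho> (\<lambda>x. f x - g x) \<and> rho_norm \<rho> (\<lambda>x. f x - g x) < e)}"

definition op_norm_rho :: "('a::topological_space \<Rightarrow> real) \<Rightarrow> (('a \<Rightarrow> real) \<Rightarrow> ('a \<Rightarrow> real)) \<Rightarrow> ereal" where
  "op_norm_rho \<rho> T = (SUP f\<in>{f\<in>B_rho \<rho>. rho_norm \<rho> f \<le> 1}. ereal (rho_norm \<rho> (T f)))"

definition rhoN :: "nat \<Rightarrow> real" where
  "rhoN n = exp (real n ^ 2)"

definition ptrans :: "real \<Rightarrow> real \<Rightarrow> nat \<Rightarrow> nat \<Rightarrow> real" where
  "ptrans \<alpha> t i j =
    (if i = 0 then (if j = 0 then 1 else 0)
     else if even i then
       (if j = i then exp (- ((real i - 1) powr \<alpha>) * t)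
        else if j = 0 then 1 - exp (- ((real i - 1) powr \<alpha>) * t)
        else 0)
     else
       (if j = i then exp (- (real i powr \<alpha>) * t)
        else if j = i + 1 then exp (- real i) * real i powr \<alpha> * t * exp (- (real i powr \<alpha>) * t)
        else if j = 0 then 1 - exp (- (real i powr \<alpha>) * t)
                 - exp (- real i) * real i powr \<alpha> * t * exp (- (real i powr \<alpha>) * t)
        else 0))"

definition Pop :: "real \<Rightarrow> real \<Rightarrow> (nat \<Rightarrow> real) \<Rightarrow> nat \<Rightarrow> real" where
  "Pop \<alpha> t f n = (\<Sum>j. ptrans \<alpha> t n j * f j)"

end

theory Submission
  imports Defs "HOL-Real_Asymp.Real_Asymp"
begin


lemma rhoN_pos: "rhoN n > 0" by (simp add: rhoN_def)
lemma rhoN_ge1: "rhoN n \<ge> 1" by (simp add: rhoN_def)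
lemma rhoN_0: "rhoN 0 = 1" by (simp add: rhoN_def)
lemma inv_rhoN_0: "(\<lambda>n. 1 / rhoN n) \<longlonglongrightarrow> 0"
  unfolding rhoN_def by real_asymp

lemma rho_le:
  assumes "rho_bdd r f" shows "\<bar>f x\<bar> / r x \<le> rho_norm r f"
  using assms unfolding rho_bdd_def rho_norm_def by (auto intro: cSUP_upper)

lemma rho_norm_le:
  assumes "\<And>x. \<bar>f x\<bar> / r x \<le> M" shows "rho_norm r f \<le> M"
  unfolding rho_norm_def by (rule cSUP_least) (auto intro: assms)

lemma rho_bddI:
  assumes "\<And>x. \<bar>f x\<bar> / r x \<le> M" shows "rho_bdd r f"
  unfolding rho_bdd_def using assms by (intro bdd_aboveI2) auto

lemma B_imp_lim:
  assumes "f \<in> B_rho rhoN" shows "(\<lambda>n. f n / rhoN n) \<longlonglongrightarrow> 0"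
proof (rule LIMSEQ_I)
  fix e :: real assume e: "e > 0"
  from assms have "\<forall>e>0. \<exists>g. continuous_on UNIV g \<and> bounded (range g) \<and>
          rho_bdd rhoN (\<lambda>x. f x - g x) \<and> rho_norm rhoN (\<lambda>x. f x - g x) < e"
    unfolding B_rho_def mem_Collect_eq by (rule conjunct2)
  then obtain g where g: "bounded (range g)" "rho_bdd rhoN (\<lambda>x. f x - g x)"
     "rho_norm rhoN (\<lambda>x. f x - g x) < e/2"
    using e by (meson half_gt_zero)
  from g(1) obtain B where B: "\<And>n. \<bar>g n\<bar> \<le> B" unfolding bounded_iff by auto
  have "(\<lambda>n. B * (1 / rhoN n)) \<longlonglongrightarrow> B * 0" by (intro tendsto_intros inv_rhoN_0)
  then have "eventually (\<lambda>n. B * (1 / rhoN n) < e/2) sequentially"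
    using e by (intro order_tendstoD) auto
  then obtain N where N: "\<And>n. n \<ge> N \<Longrightarrow> B / rhoN n < e/2"
    unfolding eventually_sequentially by auto
  show "\<exists>no. \<forall>n\<ge>no. norm (f n / rhoN n - 0) < e"
  proof (intro exI allI impI)
    fix n assume n: "n \<ge> N"
    have p: "rhoN n > 0" by (rule rhoN_pos)
    have "\<bar>f n - g n\<bar> / rhoN n < e/2" using rho_le[OF g(2), of n] g(3) by linarith
    moreover have "\<bar>g n\<bar> / rhoN n \<le> B / rhoN n" using B[of n] p by (simp add: divide_right_mono)
    moreover have "\<bar>f n\<bar> / rhoN n \<le> \<bar>f n - g n\<bar> / rhoN n + \<bar>g n\<bar> / rhoN n"
      using p by (simp add: add_divide_distrib[symmetric] divide_right_mono)
    ultimately have "\<bar>f n\<bar> / rhoN n < e" using N[OF n] by linarith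
    then show "norm (f n / rhoN n - 0) < e" using p by (simp add: abs_divide)
  qed
qed

lemma lim_imp_B:
  assumes lim: "(\<lambda>n. f n / rhoN n) \<longlonglongrightarrow> 0" shows "f \<in> B_rho rhoN"
proof -
  have p: "\<And>n. rhoN n > 0" by (rule rhoN_pos)
  obtain K where K: "\<And>n. norm (f n / rhoN n) \<le> K"
    using convergent_imp_Bseq[OF convergentI[OF lim]] unfolding Bseq_def by auto
  have nrm: "\<bar>f n\<bar> / rhoN n = norm (f n / rhoN n)" for n using p[of n] by (simp add: abs_divide)
  have bd: "rho_bdd rhoN f" using K by (intro rho_bddI[of _ _ K]) (simp add: nrm)
  have "\<exists>g. continuous_on UNIV g \<and> bounded (range g) \<and>
          rho_bdd rhoN (\<lambda>x. f x - g x) \<and> rho_norm rhoN (\<lambda>x. f x - g x) < e" if e: "e > 0" for e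
  proof -
    obtain N where N: "\<And>n. n \<ge> N \<Longrightarrow> norm (f n / rhoN n - 0) < e/2"
      using LIMSEQ_D[OF lim, of "e/2"] e by auto
    define g where "g = (\<lambda>n. if n < N then f n else 0)"
    have "range g \<subseteq> insert 0 (f ` {..<N})" unfolding g_def by auto
    then have "finite (range g)" by (rule finite_subset) auto
    then have bg: "bounded (range g)" by (rule finite_imp_bounded)
    have le: "\<bar>f x - g x\<bar> / rhoN x \<le> e/2" for x
      using N[of x] p[of x] e unfolding g_def by (auto simp: abs_divide)
    have "rho_norm rhoN (\<lambda>x. f x - g x) < e"
      using rho_norm_le[of "\<lambda>x. f x - g x" rhoN "e/2", OF le] e by linarith
    moreover have "rho_bdd rhoN (\<lambda>x. f x - g x)" using le by (rule rho_bddI)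
    ultimately show ?thesis using bg by auto
  qed
  then show ?thesis unfolding B_rho_def using bd by (intro CollectI conjI) blast+
qed

lemma B_iff: "f \<in> B_rho rhoN \<longleftrightarrow> (\<lambda>n. f n / rhoN n) \<longlonglongrightarrow> 0"
  using B_imp_lim lim_imp_B by (rule iffI)

lemma B_bdd: "f \<in> B_rho rhoN \<Longrightarrow> rho_bdd rhoN f"
  unfolding B_rho_def mem_Collect_eq by (rule conjunct1)

definition aa :: "real \<Rightarrow> real \<Rightarrow> nat \<Rightarrow> real" where
  "aa \<alpha> t n = exp (- (real n powr \<alpha>) * t)"
definition bb :: "real \<Rightarrow> real \<Rightarrow> nat \<Rightarrow> real" where
  "bb \<alpha> t n = exp (- real n) * real n powr \<alpha> * t * exp (- (real n powr \<alpha>) * t)"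
definition ee :: "real \<Rightarrow> real \<Rightarrow> nat \<Rightarrow> real" where
  "ee \<alpha> t n = exp (- ((real n - 1) powr \<alpha>) * t)"
definition hh :: "real \<Rightarrow> real \<Rightarrow> nat \<Rightarrow> real" where
  "hh \<alpha> t n = real n powr \<alpha> * t * exp (real n + 1 - real n powr \<alpha> * t)"

lemma ptrans_zero: "j \<notin> {0, n, Suc n} \<Longrightarrow> ptrans \<alpha> t n j = 0"
  unfolding ptrans_def by auto

lemma summable_row: "summable (\<lambda>j. ptrans \<alpha> t n j * f j)"
  by (rule summable_finite[of "{0, n, Suc n}"]) (auto simp: ptrans_zero)

lemma Pop_0: "Pop \<alpha> t f 0 = f 0"
proof -
  have "Pop \<alpha> t f 0 = (\<Sum>j\<in>{0}. ptrans \<alpha> t 0 j * f j)"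
    unfolding Pop_def by (rule suminf_finite) (auto simp: ptrans_def)
  then show ?thesis by (simp add: ptrans_def)
qed

lemma Pop_even: assumes "even n" "n \<noteq> 0"
  shows "Pop \<alpha> t f n = ee \<alpha> t n * f n + (1 - ee \<alpha> t n) * f 0"
proof -
  have "Pop \<alpha> t f n = (\<Sum>j\<in>{0, n}. ptrans \<alpha> t n j * f j)"
    unfolding Pop_def by (rule suminf_finite) (use assms in \<open>auto simp: ptrans_def\<close>)
  then show ?thesis using assms by (simp add: ptrans_def ee_def)
qed

lemma Pop_odd: assumes "odd n"
  shows "Pop \<alpha> t f n = aa \<alpha> t n * f n + bb \<alpha> t n * f (Suc n) + (1 - aa \<alpha> t n - bb \<alpha> t n) * f 0"
proof -
  have n0: "n \<noteq> 0" using assms by (cases n) auto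
  have "Pop \<alpha> t f n = (\<Sum>j\<in>{0, n, Suc n}. ptrans \<alpha> t n j * f j)"
    unfolding Pop_def by (rule suminf_finite) (use assms in \<open>auto simp: ptrans_def\<close>)
  also have "\<dots> = ptrans \<alpha> t n 0 * f 0 + ptrans \<alpha> t n n * f n + ptrans \<alpha> t n (Suc n) * f (Suc n)"
    using n0 by simp
  finally show ?thesis using assms n0 by (simp add: ptrans_def aa_def bb_def algebra_simps)
qed

lemma ee_Suc: "ee \<alpha> t (Suc n) = aa \<alpha> t n"
  by (simp add: ee_def aa_def)

lemma aa_nonneg: "aa \<alpha> t n \<ge> 0" by (simp add: aa_def)
lemma ee_nonneg: "ee \<alpha> t n \<ge> 0" by (simp add: ee_def)
lemma bb_nonneg: "t \<ge> 0 \<Longrightarrow> bb \<alpha> t n \<ge> 0" by (simp add: bb_def)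
lemma ee_le1: "t \<ge> 0 \<Longrightarrow> n \<noteq> 0 \<Longrightarrow> ee \<alpha> t n \<le> 1"
  unfolding ee_def by (simp add: mult_nonneg_nonneg)
lemma aa_le1: "t \<ge> 0 \<Longrightarrow> aa \<alpha> t n \<le> 1"
  unfolding aa_def by (simp add: mult_nonneg_nonneg)
lemma ab_le1: assumes "t \<ge> 0" shows "aa \<alpha> t n + bb \<alpha> t n \<le> 1"
proof -
  define x where "x = real n powr \<alpha> * t"
  have x: "x \<ge> 0" using assms by (simp add: x_def)
  have "exp (- real n) * x \<le> x" using x by (simp add: mult_left_le_one_le)
  have eq: "aa \<alpha> t n + bb \<alpha> t n = exp (-x) + (exp (- real n) * x) * exp (-x)"
    unfolding aa_def bb_def x_def by (simp add: algebra_simps)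
  have "(exp (- real n) * x) * exp (-x) \<le> x * exp (-x)"
    using \<open>exp (- real n) * x \<le> x\<close> by (rule mult_right_mono) simp
  then have "aa \<alpha> t n + bb \<alpha> t n \<le> exp (-x) * (1 + x)"
    unfolding eq by (simp add: algebra_simps)
  also have "\<dots> \<le> 1"
  proof -
    have "1 + x \<le> exp x" by (rule exp_ge_add_one_self)
    then have "exp (-x) * (1 + x) \<le> exp (-x) * exp x" by (simp add: mult_left_mono)
    then show ?thesis by (simp add: exp_minus field_simps)
  qed
  finally show ?thesis .
qed

lemma bb_rho: "bb \<alpha> t n * rhoN (Suc n) = hh \<alpha> t n * rhoN n"
proof -
  have "exp (- real n) * exp (- (real n powr \<alpha>) * t) * exp ((real (Suc n))^2)
      = exp (real n + 1 - real n powr \<alpha> * t) * exp ((real n)^2)"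
    unfolding exp_add[symmetric] by (simp add: power2_eq_square algebra_simps)
  then show ?thesis unfolding bb_def hh_def rhoN_def
    by (metis (no_types, lifting) mult.commute mult.left_commute)
qed


lemma abs_rhoN[simp]: "\<bar>rhoN n\<bar> = rhoN n" using rhoN_pos[of n] by simp
lemma hh_lim: assumes "\<alpha> > 1" "t \<ge> 0" shows "hh \<alpha> t \<longlonglongrightarrow> 0"
proof (cases "t = 0")
  case True
  have "hh \<alpha> t = (\<lambda>n. 0)" using True by (simp add: hh_def fun_eq_iff)
  then show ?thesis by simp
next
  case False then have "t > 0" using assms by simp
  then show ?thesis using assms(1) unfolding hh_def by real_asymp
qed

lemma tri3:
  fixes a b c x y z :: real
  assumes "a \<ge> 0" "b \<ge> 0" "c \<ge> 0"
  shows "\<bar>a*x + b*y + c*z\<bar> \<le> a*\<bar>x\<bar> + b*\<bar>y\<bar> + c*\<bar>z\<bar>"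
proof -
  have "\<bar>a*x + b*y + c*z\<bar> \<le> \<bar>a*x\<bar> + \<bar>b*y\<bar> + \<bar>c*z\<bar>" by linarith
  then show ?thesis using assms by (simp add: abs_mult)
qed

lemma hh_nonneg: "t \<ge> 0 \<Longrightarrow> hh \<alpha> t n \<ge> 0" by (simp add: hh_def)

lemma Pop_bound_num: assumes "t \<ge> 0"
  shows "\<bar>Pop \<alpha> t f n\<bar> \<le> \<bar>f n\<bar> + \<bar>f 0\<bar> + hh \<alpha> t n * rhoN n / rhoN (Suc n) * \<bar>f (Suc n)\<bar>"
proof -
  have "hh \<alpha> t n * rhoN n / rhoN (Suc n) \<ge> 0"
    using hh_nonneg[OF assms, of \<alpha> n] rhoN_pos[of n] rhoN_pos[of "Suc n"] by simp
  then have hp: "hh \<alpha> t n * rhoN n / rhoN (Suc n) * \<bar>f (Suc n)\<bar> \<ge> 0"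
    by (rule mult_nonneg_nonneg) simp
  consider "n = 0" | "even n" "n \<noteq> 0" | "odd n" by auto
  then show ?thesis
  proof cases
    case 1 then show ?thesis using hp by (simp add: Pop_0)
  next
    case 2
    have e0: "ee \<alpha> t n \<ge> 0" "ee \<alpha> t n \<le> 1" using ee_nonneg ee_le1[OF assms 2(2)] by auto
    have "\<bar>ee \<alpha> t n * f n + (1 - ee \<alpha> t n) * f 0\<bar> \<le> ee \<alpha> t n * \<bar>f n\<bar> + (1 - ee \<alpha> t n) * \<bar>f 0\<bar>"
      using e0 by (metis abs_mult abs_of_nonneg abs_triangle_ineq diff_ge_0_iff_ge)
    also have "\<dots> \<le> 1 * \<bar>f n\<bar> + 1 * \<bar>f 0\<bar>"
      using e0 by (intro add_mono mult_right_mono) auto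
    finally show ?thesis using hp 2 by (simp add: Pop_even)
  next
    case 3
    have a0: "aa \<alpha> t n \<ge> 0" "aa \<alpha> t n \<le> 1" using aa_nonneg aa_le1[OF assms] by auto
    have b0: "bb \<alpha> t n \<ge> 0" "1 - aa \<alpha> t n - bb \<alpha> t n \<ge> 0" "1 - aa \<alpha> t n - bb \<alpha> t n \<le> 1"
      using bb_nonneg[OF assms, of \<alpha> n] ab_le1[OF assms, of \<alpha> n] a0 by auto
    have bbeq: "bb \<alpha> t n = hh \<alpha> t n * rhoN n / rhoN (Suc n)"
      using bb_rho[of \<alpha> t n] rhoN_pos[of "Suc n"] by (simp add: field_simps)
    have "\<bar>aa \<alpha> t n * f n + bb \<alpha> t n * f (Suc n) + (1 - aa \<alpha> t n - bb \<alpha> t n) * f 0\<bar>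
        \<le> aa \<alpha> t n * \<bar>f n\<bar> + bb \<alpha> t n * \<bar>f (Suc n)\<bar> + (1 - aa \<alpha> t n - bb \<alpha> t n) * \<bar>f 0\<bar>"
      using a0 b0 by (intro tri3) auto
    also have "\<dots> \<le> 1 * \<bar>f n\<bar> + bb \<alpha> t n * \<bar>f (Suc n)\<bar> + 1 * \<bar>f 0\<bar>"
      using a0 b0 by (intro add_mono mult_right_mono) auto
    finally show ?thesis using 3 by (simp add: Pop_odd bbeq)
  qed
qed

lemma Pop_bound: assumes "t \<ge> 0"
  shows "\<bar>Pop \<alpha> t f n\<bar> / rhoN n \<le> \<bar>f n\<bar> / rhoN n + \<bar>f 0\<bar> * (1 / rhoN n)
          + hh \<alpha> t n * (\<bar>f (Suc n)\<bar> / rhoN (Suc n))"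
proof -
  have p: "rhoN n > 0" by (rule rhoN_pos)
  have "\<bar>Pop \<alpha> t f n\<bar> / rhoN n \<le> (\<bar>f n\<bar> + \<bar>f 0\<bar> + hh \<alpha> t n * rhoN n / rhoN (Suc n) * \<bar>f (Suc n)\<bar>) / rhoN n"
    by (rule divide_right_mono[OF Pop_bound_num[OF assms]]) (use p in simp)
  also have "\<dots> = \<bar>f n\<bar> / rhoN n + \<bar>f 0\<bar> * (1 / rhoN n) + hh \<alpha> t n * (\<bar>f (Suc n)\<bar> / rhoN (Suc n))"
    using p by (simp add: field_simps)
  finally show ?thesis .
qed

lemma Pop_in_B: assumes "\<alpha> > 1" "t \<ge> 0" "f \<in> B_rho rhoN" shows "Pop \<alpha> t f \<in> B_rho rhoN"
proof -
  have ef: "(\<lambda>n. \<bar>f n\<bar> / rhoN n) \<longlonglongrightarrow> 0"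
    using tendsto_rabs[OF B_imp_lim[OF assms(3)]] by (simp add: abs_divide)
  have es: "(\<lambda>n. \<bar>f (Suc n)\<bar> / rhoN (Suc n)) \<longlonglongrightarrow> 0"
    using LIMSEQ_Suc[OF ef] by simp
  have g: "(\<lambda>n. \<bar>f n\<bar> / rhoN n + \<bar>f 0\<bar> * (1 / rhoN n) + hh \<alpha> t n * (\<bar>f (Suc n)\<bar> / rhoN (Suc n)))
        \<longlonglongrightarrow> 0 + \<bar>f 0\<bar> * 0 + 0 * 0"
    by (intro tendsto_intros ef es inv_rhoN_0 hh_lim assms)
  show ?thesis unfolding B_iff
    by (rule Lim_null_comparison[OF _ g[simplified]])
       (use Pop_bound[OF assms(2)] rhoN_pos in \<open>auto simp: abs_divide\<close>)
qed

lemma rho_norm_nonneg: "rho_bdd rhoN f \<Longrightarrow> rho_norm rhoN f \<ge> 0"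
  using rho_le[of rhoN f 0] rhoN_pos[of 0] by (meson abs_ge_zero divide_nonneg_pos order_trans)

lemma Pop_bdd: assumes "\<alpha> > 1" "t \<ge> 0"
  shows "\<exists>C. \<forall>f\<in>B_rho rhoN. rho_norm rhoN (Pop \<alpha> t f) \<le> C * rho_norm rhoN f"
proof -
  obtain H where H: "\<And>n. norm (hh \<alpha> t n) \<le> H"
    using convergent_imp_Bseq[OF convergentI[OF hh_lim[OF assms]]] unfolding Bseq_def by auto
  have "rho_norm rhoN (Pop \<alpha> t f) \<le> (2 + H) * rho_norm rhoN f" if f: "f \<in> B_rho rhoN" for f
  proof -
    define N where "N = rho_norm rhoN f"
    have bd: "rho_bdd rhoN f" using f by (rule B_bdd)
    have le: "\<bar>f n\<bar> / rhoN n \<le> N" for n using rho_le[OF bd] N_def by simp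
    have "\<bar>Pop \<alpha> t f n\<bar> / rhoN n \<le> (2 + H) * N" for n
    proof -
      have h0: "0 \<le> hh \<alpha> t n" "hh \<alpha> t n \<le> H" using hh_nonneg[OF assms(2)] H[of n] by auto
      have "\<bar>f 0\<bar> * (1 / rhoN n) \<le> \<bar>f 0\<bar> * 1"
        using rhoN_ge1[of n] by (intro mult_left_mono) auto
      also have "\<dots> \<le> N" using le[of 0] by (simp add: rhoN_0)
      finally have a: "\<bar>f 0\<bar> * (1 / rhoN n) \<le> N" .
      have b: "hh \<alpha> t n * (\<bar>f (Suc n)\<bar> / rhoN (Suc n)) \<le> H * N"
        using h0 le[of "Suc n"] rhoN_pos[of "Suc n"] by (intro mult_mono) auto
      show ?thesis using Pop_bound[OF assms(2), of \<alpha> f n] le[of n] a b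
        by (simp add: algebra_simps)
    qed
    then show ?thesis unfolding N_def by (rule rho_norm_le)
  qed
  then show ?thesis by blast
qed

lemma Pop_linear: "Pop \<alpha> t (\<lambda>x. a * f x + b * g x) = (\<lambda>x. a * Pop \<alpha> t f x + b * Pop \<alpha> t g x)"
proof
  fix n :: nat
  consider "n = 0" | "even n" "n \<noteq> 0" | "odd n" by auto
  then show "Pop \<alpha> t (\<lambda>x. a * f x + b * g x) n = a * Pop \<alpha> t f n + b * Pop \<alpha> t g n"
    by cases (simp_all add: Pop_0 Pop_even Pop_odd algebra_simps)
qed

lemma Pop_rho: "odd n \<Longrightarrow> Pop \<alpha> t rhoN n = rhoN n * exp (- (real n powr \<alpha>) * t)
          + rhoN (n + 1) * real n powr \<alpha> * t * exp (- (real n powr \<alpha>) * t) * exp (- real n)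
          + rhoN 0 * (1 - exp (- (real n powr \<alpha>) * t)
                     - exp (- real n) * real n powr \<alpha> * t * exp (- (real n powr \<alpha>) * t))"
  by (simp add: Pop_odd aa_def bb_def algebra_simps)

lemma Pop_zero_time: "Pop \<alpha> 0 f = f"
proof
  fix n :: nat
  consider "n = 0" | "even n" "n \<noteq> 0" | "odd n" by auto
  then show "Pop \<alpha> 0 f n = f n"
    by cases (simp_all add: Pop_0 Pop_even Pop_odd aa_def bb_def ee_def)
qed

lemma aa_add: "aa \<alpha> (t + s) n = aa \<alpha> t n * aa \<alpha> s n"
  unfolding aa_def by (simp add: exp_add[symmetric] algebra_simps)
lemma ee_add: "ee \<alpha> (t + s) n = ee \<alpha> t n * ee \<alpha> s n"
  unfolding ee_def by (simp add: exp_add[symmetric] algebra_simps)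
lemma bb_add: "bb \<alpha> (t + s) n = aa \<alpha> s n * bb \<alpha> t n + bb \<alpha> s n * aa \<alpha> t n"
proof -
  have e: "exp (- (real n powr \<alpha>) * (t + s)) = exp (- (real n powr \<alpha>) * t) * exp (- (real n powr \<alpha>) * s)"
    by (simp add: exp_add[symmetric] algebra_simps)
  show ?thesis unfolding bb_def aa_def e by (simp add: algebra_simps)
qed

lemma Pop_semigroup: "Pop \<alpha> (t + s) f = Pop \<alpha> s (Pop \<alpha> t f)"
proof
  fix n :: nat
  consider "n = 0" | "even n" "n \<noteq> 0" | "odd n" by auto
  then show "Pop \<alpha> (t + s) f n = Pop \<alpha> s (Pop \<alpha> t f) n"
  proof cases
    case 1 then show ?thesis by (simp add: Pop_0)
  next
    case 2 then show ?thesis by (simp add: Pop_0 Pop_even ee_add algebra_simps)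
  next
    case 3
    have s: "even (Suc n)" "Suc n \<noteq> 0" using 3 by auto
    show ?thesis using 3
      by (simp add: Pop_0 Pop_odd Pop_even[OF s] ee_Suc aa_add bb_add algebra_simps)
  qed
qed

lemma Pop_cont: "((\<lambda>t. Pop \<alpha> t f x) \<longlongrightarrow> f x) (at_right 0)"
proof -
  consider "x = 0" | "even x" "x \<noteq> 0" | "odd x" by auto
  then show ?thesis
  proof cases
    case 1 then show ?thesis by (simp add: Pop_0)
  next
    case 2
    have "((\<lambda>t. exp (- ((real x - 1) powr \<alpha>) * t) * f x + (1 - exp (- ((real x - 1) powr \<alpha>) * t)) * f 0)
       \<longlongrightarrow> exp (- ((real x - 1) powr \<alpha>) * 0) * f x + (1 - exp (- ((real x - 1) powr \<alpha>) * 0)) * f 0) (at_right 0)"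
      by (intro tendsto_intros)
    then show ?thesis using 2 by (simp add: Pop_even ee_def)
  next
    case 3
    have "((\<lambda>t. exp (- (real x powr \<alpha>) * t) * f x
           + exp (- real x) * real x powr \<alpha> * t * exp (- (real x powr \<alpha>) * t) * f (Suc x)
           + (1 - exp (- (real x powr \<alpha>) * t) - exp (- real x) * real x powr \<alpha> * t * exp (- (real x powr \<alpha>) * t)) * f 0)
       \<longlongrightarrow> exp (- (real x powr \<alpha>) * 0) * f x
           + exp (- real x) * real x powr \<alpha> * 0 * exp (- (real x powr \<alpha>) * 0) * f (Suc x)
           + (1 - exp (- (real x powr \<alpha>) * 0) - exp (- real x) * real x powr \<alpha> * 0 * exp (- (real x powr \<alpha>) * 0)) * f 0) (at_right 0)"
      by (intro tendsto_intros)
    then show ?thesis using 3 by (simp add: Pop_odd aa_def bb_def)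
  qed
qed

lemma Pop_pos: assumes "t \<ge> 0" "\<And>x. f x \<ge> 0" shows "Pop \<alpha> t f x \<ge> 0"
proof -
  consider "x = 0" | "even x" "x \<noteq> 0" | "odd x" by auto
  then show ?thesis
  proof cases
    case 1 then show ?thesis using assms by (simp add: Pop_0)
  next
    case 2
    have "ee \<alpha> t x \<ge> 0" "ee \<alpha> t x \<le> 1" using ee_nonneg ee_le1[OF assms(1) 2(2)] by auto
    then show ?thesis using 2 assms(2)[of x] assms(2)[of 0] by (simp add: Pop_even)
  next
    case 3
    have "aa \<alpha> t x \<ge> 0" "bb \<alpha> t x \<ge> 0" "1 - aa \<alpha> t x - bb \<alpha> t x \<ge> 0"
      using aa_nonneg bb_nonneg[OF assms(1)] ab_le1[OF assms(1), of \<alpha> x] by auto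
    then show ?thesis using 3 assms(2)[of x] assms(2)[of 0] assms(2)[of "Suc x"]
      by (simp add: Pop_odd)
  qed
qed



definition fk :: "nat \<Rightarrow> nat \<Rightarrow> real" where
  "fk k = (\<lambda>j. if j = Suc k then rhoN j else 0)"

lemma fk_B: "fk k \<in> B_rho rhoN"
proof (rule lim_imp_B)
  have "eventually (\<lambda>j. fk k j / rhoN j = 0) sequentially"
    unfolding eventually_sequentially by (rule exI[of _ "Suc (Suc k)"]) (auto simp: fk_def)
  then show "(\<lambda>j. fk k j / rhoN j) \<longlonglongrightarrow> 0" by (rule tendsto_eventually)
qed

lemma fk_norm: "rho_norm rhoN (fk k) \<le> 1"
  by (rule rho_norm_le) (auto simp: fk_def less_imp_le[OF rhoN_pos])

lemma op_lower: assumes "\<alpha> > 1" "t \<ge> 0" "odd k"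
  shows "ereal (hh \<alpha> t k) \<le> op_norm_rho rhoN (Pop \<alpha> t)"
proof -
  have P: "Pop \<alpha> t (fk k) k = bb \<alpha> t k * rhoN (Suc k)"
    using assms(3) by (simp add: Pop_odd fk_def)
  have "hh \<alpha> t k = \<bar>Pop \<alpha> t (fk k) k\<bar> / rhoN k"
    using P bb_rho[of \<alpha> t k] bb_nonneg[OF assms(2), of \<alpha> k] rhoN_pos[of k] rhoN_pos[of "Suc k"]
      hh_nonneg[OF assms(2), of \<alpha> k]
    by (simp add: abs_mult)
  also have "\<dots> \<le> rho_norm rhoN (Pop \<alpha> t (fk k))"
    by (rule rho_le[OF B_bdd[OF Pop_in_B[OF assms(1,2) fk_B]]])
  finally have "ereal (hh \<alpha> t k) \<le> ereal (rho_norm rhoN (Pop \<alpha> t (fk k)))" by simp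
  also have "\<dots> \<le> op_norm_rho rhoN (Pop \<alpha> t)"
    unfolding op_norm_rho_def by (rule SUP_upper) (simp add: fk_B fk_norm)
  finally show ?thesis .
qed

lemma exists_k:
  assumes a: "\<alpha> > 1" and t: "0 < t" "t < 1" and K: "K \<ge> 1" "real K powr \<alpha> * t < 1"
  shows "\<exists>k. odd k \<and> k > K \<and> 1 \<le> real k powr \<alpha> * t \<and> real k powr \<alpha> * t \<le> 3 powr \<alpha>"
proof -
  define S where "S = {m::nat. 1 \<le> real (2*m+1) powr \<alpha> * t}"
  define m1 where "m1 = nat \<lceil>1/t\<rceil>"
  have "1/t \<le> real (2*m1+1)" unfolding m1_def by linarith
  also have "real (2*m1+1) = real (2*m1+1) powr 1" by simp
  also have "\<dots> \<le> real (2*m1+1) powr \<alpha>" by (rule powr_mono) (use a in auto)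
  finally have "1 \<le> real (2*m1+1) powr \<alpha> * t" using t by (simp add: field_simps)
  then have m1S: "m1 \<in> S" unfolding S_def by simp
  define m0 where "m0 = (LEAST m. m \<in> S)"
  have m0S: "m0 \<in> S" unfolding m0_def by (rule LeastI[of "\<lambda>m. m \<in> S", OF m1S])
  define k where "k = 2*m0+1"
  have x1: "1 \<le> real k powr \<alpha> * t" using m0S unfolding S_def k_def by simp
  have m0: "m0 \<noteq> 0"
  proof
    assume "m0 = 0"
    then have "1 \<le> t" using x1 unfolding k_def by simp
    then show False using t by simp
  qed
  have "m0 - 1 \<notin> S" unfolding m0_def by (rule not_less_Least) (use m0 m0_def in simp)
  then have less: "real (k - 2) powr \<alpha> * t < 1"
    unfolding S_def k_def using m0 by (simp add: algebra_simps)
  have k3: "k \<ge> 3" using m0 unfolding k_def by simp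
  have "real k \<le> 3 * real (k - 2)" using k3 by linarith
  then have "real k powr \<alpha> \<le> (3 * real (k - 2)) powr \<alpha>"
    using a by (intro powr_mono2) auto
  also have "\<dots> = 3 powr \<alpha> * real (k - 2) powr \<alpha>" by (simp add: powr_mult)
  finally have "real k powr \<alpha> * t \<le> 3 powr \<alpha> * (real (k - 2) powr \<alpha> * t)"
    using t by (simp add: mult_right_mono mult.assoc)
  also have "\<dots> \<le> 3 powr \<alpha>" using less by (simp add: mult_left_le)
  finally have x2: "real k powr \<alpha> * t \<le> 3 powr \<alpha>" .
  have kK: "k > K"
  proof (rule ccontr)
    assume "\<not> k > K"
    then have "real k powr \<alpha> \<le> real K powr \<alpha>" by (intro powr_mono2) (use a in auto)
    then have "real k powr \<alpha> * t \<le> real K powr \<alpha> * t" using t by (simp add: mult_right_mono)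
    then show False using x1 K by linarith
  qed
  show ?thesis using x1 x2 kK by (intro exI[of _ k]) (simp add: k_def)
qed

lemma op_norm_infty: assumes a: "\<alpha> > 1"
  shows "((\<lambda>t. op_norm_rho rhoN (Pop \<alpha> t)) \<longlongrightarrow> \<infinity>) (at_right 0)"
  unfolding tendsto_PInfty
proof
  fix r :: real
  define K where "K = nat \<lceil>\<bar>r\<bar> + 3 powr \<alpha>\<rceil> + 1"
  have K1: "K \<ge> 1" unfolding K_def by simp
  have Kr: "real K \<ge> \<bar>r\<bar> + 3 powr \<alpha>" unfolding K_def by linarith
  have Kp: "real K powr \<alpha> > 0" using K1 by simp
  have "eventually (\<lambda>t. ereal r < op_norm_rho rhoN (Pop \<alpha> t)) (at_right (0::real))"
    unfolding eventually_at_right_field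
  proof (intro exI[of _ "min 1 (1 / (real K powr \<alpha>))"] conjI allI impI)
    show "0 < min 1 (1 / (real K powr \<alpha>))" using Kp by simp
    fix t :: real assume t0: "0 < t" and tb: "t < min 1 (1 / (real K powr \<alpha>))"
    have t1: "t < 1" using tb by simp
    have "real K powr \<alpha> * t < real K powr \<alpha> * (1 / (real K powr \<alpha>))"
      using tb Kp by (intro mult_strict_left_mono) auto
    then have tK: "real K powr \<alpha> * t < 1" using Kp by simp
    obtain k where k: "odd k" "k > K" "1 \<le> real k powr \<alpha> * t" "real k powr \<alpha> * t \<le> 3 powr \<alpha>"
      using exists_k[OF a t0 t1 K1 tK] by blast
    have "r < 1 + (real K + 1 - 3 powr \<alpha>)" using Kr by linarith
    also have "\<dots> \<le> exp (real K + 1 - 3 powr \<alpha>)" by (rule exp_ge_add_one_self)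
    also have "\<dots> \<le> exp (real k + 1 - real k powr \<alpha> * t)" using k(2,4) by simp
    also have "\<dots> \<le> (real k powr \<alpha> * t) * exp (real k + 1 - real k powr \<alpha> * t)"
      using k(3) by (simp add: mult_le_cancel_right1)
    also have "\<dots> = hh \<alpha> t k" by (simp add: hh_def)
    finally have "ereal r < ereal (hh \<alpha> t k)" by simp
    also have "\<dots> \<le> op_norm_rho rhoN (Pop \<alpha> t)" using op_lower[OF a _ k(1)] t0 by simp
    finally show "ereal r < op_norm_rho rhoN (Pop \<alpha> t)" .
  qed
  then show "\<forall>\<^sub>F t in at_right 0. ereal r < op_norm_rho rhoN (Pop \<alpha> t)" .
qed

lemma not_P4: assumes a: "\<alpha> > 1"
  shows "\<not> (\<exists>\<epsilon>>0. \<exists>C::real. \<forall>t\<in>{0..\<epsilon>}. op_norm_rho rhoN (Pop \<alpha> t) \<le> ereal C)"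
proof
  assume "\<exists>\<epsilon>>0. \<exists>C::real. \<forall>t\<in>{0..\<epsilon>}. op_norm_rho rhoN (Pop \<alpha> t) \<le> ereal C"
  then obtain \<epsilon> C where e: "\<epsilon> > 0" and C: "\<forall>t\<in>{0..\<epsilon>}. op_norm_rho rhoN (Pop \<alpha> t) \<le> ereal C"
    by (elim exE conjE)
  have "eventually (\<lambda>t. ereal C < op_norm_rho rhoN (Pop \<alpha> t)) (at_right (0::real))"
    using op_norm_infty[OF a] unfolding tendsto_PInfty by (rule spec)
  then obtain b where b: "b > 0" and bb: "\<forall>t>0. t < b \<longrightarrow> ereal C < op_norm_rho rhoN (Pop \<alpha> t)"
    unfolding eventually_at_right_field by (elim exE conjE)
  define t where "t = min b \<epsilon> / 2"
  have t1: "t > 0" "t < b" "t \<in> {0..\<epsilon>}" using b e unfolding t_def by auto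
  have "ereal C < op_norm_rho rhoN (Pop \<alpha> t)" using bb t1 by simp
  moreover have "op_norm_rho rhoN (Pop \<alpha> t) \<le> ereal C" using C t1(3) by (rule bspec)
  ultimately show False by simp
qed

definition gq :: "nat \<Rightarrow> real" where
  "gq m = (if even m \<and> m \<noteq> 0 then exp (real m ^ 2 - real m) else 0)"

lemma gq_B: "gq \<in> B_rho rhoN"
proof (rule lim_imp_B)
  have lim: "(\<lambda>m. exp (- real m)) \<longlonglongrightarrow> 0" by real_asymp
  have le: "norm (gq m / rhoN m) \<le> exp (- real m)" for m
  proof (cases "even m \<and> m \<noteq> 0")
    case True
    have "gq m / rhoN m = exp (real m ^ 2 - real m) / exp (real m ^ 2)"
      using True by (simp add: gq_def rhoN_def)
    also have "\<dots> = exp ((real m ^ 2 - real m) - real m ^ 2)" by (rule exp_diff[symmetric])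
    also have "\<dots> = exp (- real m)" by simp
    finally show ?thesis by simp
  next
    case False
    then have "gq m = 0" unfolding gq_def by (rule if_not_P)
    then show ?thesis by simp
  qed
  show "(\<lambda>m. gq m / rhoN m) \<longlonglongrightarrow> 0"
    by (rule Lim_null_comparison[OF always_eventually lim]) (use le in blast)
qed

lemma B_diff: assumes "f \<in> B_rho rhoN" "g \<in> B_rho rhoN" shows "(\<lambda>x. f x - g x) \<in> B_rho rhoN"
proof -
  have e: "(\<lambda>n. (f n - g n) / rhoN n) = (\<lambda>n. f n / rhoN n - g n / rhoN n)"
    by (simp add: diff_divide_distrib)
  have "(\<lambda>n. f n / rhoN n - g n / rhoN n) \<longlonglongrightarrow> 0 - 0"
    by (intro tendsto_diff B_imp_lim assms)
  then show ?thesis unfolding B_iff e by simp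
qed

lemma not_strong: assumes a: "\<alpha> > 1"
  shows "\<not> (\<forall>f\<in>B_rho rhoN. ((\<lambda>t. rho_norm rhoN (\<lambda>x. Pop \<alpha> t f x - f x)) \<longlongrightarrow> 0) (at_right 0))"
proof
  assume "\<forall>f\<in>B_rho rhoN. ((\<lambda>t. rho_norm rhoN (\<lambda>x. Pop \<alpha> t f x - f x)) \<longlongrightarrow> 0) (at_right 0)"
  then have "((\<lambda>t. rho_norm rhoN (\<lambda>x. Pop \<alpha> t gq x - gq x)) \<longlongrightarrow> 0) (at_right 0)"
    using gq_B by blast
  then have "eventually (\<lambda>t. rho_norm rhoN (\<lambda>x. Pop \<alpha> t gq x - gq x) < exp (-1)) (at_right (0::real))"
    by (rule order_tendstoD) simp
  then obtain b where b: "b > 0"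
    "\<And>t. t > 0 \<Longrightarrow> t < b \<Longrightarrow> rho_norm rhoN (\<lambda>x. Pop \<alpha> t gq x - gq x) < exp (-1)"
    unfolding eventually_at_right_field by blast
  define k where "k = 2 * nat \<lceil>1/b\<rceil> + 1"
  have ok: "odd k" unfolding k_def by simp
  have kb: "real k > 1/b" unfolding k_def by linarith
  have k1: "real k \<ge> 1" unfolding k_def by simp
  have "real k = real k powr 1" using k1 by simp
  also have "\<dots> \<le> real k powr \<alpha>" by (rule powr_mono) (use a k1 in auto)
  finally have kp: "real k \<le> real k powr \<alpha>" .
  have kpos: "real k powr \<alpha> > 0" using k1 by simp
  define t where "t = 1 / real k powr \<alpha>"
  have t0: "t > 0" unfolding t_def using kpos by simp
  have "1 / b < real k powr \<alpha>" using kb kp by linarith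
  then have tb: "t < b" unfolding t_def using b(1) kpos by (simp add: field_simps)
  have x1: "real k powr \<alpha> * t = 1" unfolding t_def using kpos by simp
  have gk: "gq k = 0" "gq 0 = 0" using ok by (auto simp: gq_def)
  have gs: "gq (Suc k) = rhoN (Suc k) * exp (- real (Suc k))"
  proof -
    have "even (Suc k)" using ok by simp
    then have "gq (Suc k) = exp (real (Suc k) ^ 2 + - real (Suc k))" by (simp add: gq_def)
    also have "\<dots> = rhoN (Suc k) * exp (- real (Suc k))" unfolding rhoN_def exp_add ..
    finally show ?thesis .
  qed
  have "Pop \<alpha> t gq k - gq k = bb \<alpha> t k * rhoN (Suc k) * exp (- real (Suc k))"
    using ok gk gs by (simp add: Pop_odd)
  also have "\<dots> = hh \<alpha> t k * rhoN k * exp (- real (Suc k))" by (simp add: bb_rho)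
  finally have eq: "\<bar>Pop \<alpha> t gq k - gq k\<bar> / rhoN k = hh \<alpha> t k * exp (- real (Suc k))"
    using rhoN_pos[of k] hh_nonneg[OF less_imp_le[OF t0], of \<alpha> k] by (simp add: abs_mult)
  have "hh \<alpha> t k * exp (- real (Suc k)) = exp (-1)"
    unfolding hh_def x1 by (simp add: exp_add[symmetric])
  then have "exp (-1) \<le> rho_norm rhoN (\<lambda>x. Pop \<alpha> t gq x - gq x)"
    using rho_le[OF B_bdd[OF B_diff[OF Pop_in_B[OF a less_imp_le[OF t0] gq_B] gq_B]], of k] t0 eq by simp
  then show False using b(2)[OF t0 tb] by simp
qed

theorem mainTheorem20:
  fixes \<alpha> :: real
  assumes "\<alpha> > 1"
  shows
    \<comment> \<open>each P(t) is a well-defined bounded linear operator on B^rho(N)\<close>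
    "(\<forall>t\<ge>0. \<forall>f\<in>B_rho rhoN. \<forall>n. summable (\<lambda>j. ptrans \<alpha> t n j * f j))
   \<and> (\<forall>t\<ge>0. \<forall>f\<in>B_rho rhoN. Pop \<alpha> t f \<in> B_rho rhoN)
   \<and> (\<forall>t\<ge>0. \<forall>f\<in>B_rho rhoN. \<forall>g\<in>B_rho rhoN. \<forall>a b::real.
        Pop \<alpha> t (\<lambda>x. a * f x + b * g x) = (\<lambda>x. a * Pop \<alpha> t f x + b * Pop \<alpha> t g x))
   \<and> (\<forall>t\<ge>0. \<exists>C. \<forall>f\<in>B_rho rhoN. rho_norm rhoN (Pop \<alpha> t f) \<le> C * rho_norm rhoN f)
    \<comment> \<open>formula for P(t) rho (n), n odd\<close>
   \<and> (\<forall>t\<ge>0. \<forall>n. odd n \<longrightarrow>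
        Pop \<alpha> t rhoN n = rhoN n * exp (- (real n powr \<alpha>) * t)
          + rhoN (n + 1) * real n powr \<alpha> * t * exp (- (real n powr \<alpha>) * t) * exp (- real n)
          + rhoN 0 * (1 - exp (- (real n powr \<alpha>) * t)
                     - exp (- real n) * real n powr \<alpha> * t * exp (- (real n powr \<alpha>) * t)))
    \<comment> \<open>(P1)\<close>
   \<and> (\<forall>f\<in>B_rho rhoN. Pop \<alpha> 0 f = f)
    \<comment> \<open>(P2)\<close>
   \<and> (\<forall>s\<ge>0. \<forall>t\<ge>0. \<forall>f\<in>B_rho rhoN. Pop \<alpha> (t + s) f = Pop \<alpha> s (Pop \<alpha> t f))
    \<comment> \<open>(P3)\<close>
   \<and> (\<forall>f\<in>B_rho rhoN. \<forall>x. ((\<lambda>t. Pop \<alpha> t f x) \<longlongrightarrow> f x) (at_right 0))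
    \<comment> \<open>(P5)\<close>
   \<and> (\<forall>t\<ge>0. \<forall>f\<in>B_rho rhoN. (\<forall>x. f x \<ge> 0) \<longrightarrow> (\<forall>x. Pop \<alpha> t f x \<ge> 0))
    \<comment> \<open>operator norm blows up as t tends to 0+\<close>
   \<and> ((\<lambda>t. op_norm_rho rhoN (Pop \<alpha> t)) \<longlongrightarrow> \<infinity>) (at_right 0)
    \<comment> \<open>(P4) fails\<close>
   \<and> \<not> (\<exists>\<epsilon>>0. \<exists>C::real. \<forall>t\<in>{0..\<epsilon>}. op_norm_rho rhoN (Pop \<alpha> t) \<le> ereal C)
    \<comment> \<open>not strongly continuous\<close>
   \<and> \<not> (\<forall>f\<in>B_rho rhoN. ((\<lambda>t. rho_norm rhoN (\<lambda>x. Pop \<alpha> t f x - f x)) \<longlongrightarrow> 0) (at_right 0))"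
proof (intro conjI)
  show "\<forall>t\<ge>0. \<forall>f\<in>B_rho rhoN. \<forall>n. summable (\<lambda>j. ptrans \<alpha> t n j * f j)"
    using summable_row by blast
  show "\<forall>t\<ge>0. \<forall>f\<in>B_rho rhoN. Pop \<alpha> t f \<in> B_rho rhoN"
    using Pop_in_B[OF assms] by blast
  show "\<forall>t\<ge>0. \<forall>f\<in>B_rho rhoN. \<forall>g\<in>B_rho rhoN. \<forall>a b::real.
        Pop \<alpha> t (\<lambda>x. a * f x + b * g x) = (\<lambda>x. a * Pop \<alpha> t f x + b * Pop \<alpha> t g x)"
    using Pop_linear by blast
  show "\<forall>t\<ge>0. \<exists>C. \<forall>f\<in>B_rho rhoN. rho_norm rhoN (Pop \<alpha> t f) \<le> C * rho_norm rhoN f"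
    using Pop_bdd[OF assms] by blast
  show "\<forall>t\<ge>0. \<forall>n. odd n \<longrightarrow>
        Pop \<alpha> t rhoN n = rhoN n * exp (- (real n powr \<alpha>) * t)
          + rhoN (n + 1) * real n powr \<alpha> * t * exp (- (real n powr \<alpha>) * t) * exp (- real n)
          + rhoN 0 * (1 - exp (- (real n powr \<alpha>) * t)
                     - exp (- real n) * real n powr \<alpha> * t * exp (- (real n powr \<alpha>) * t))"
    using Pop_rho by blast
  show "\<forall>f\<in>B_rho rhoN. Pop \<alpha> 0 f = f" using Pop_zero_time by blast
  show "\<forall>s\<ge>0. \<forall>t\<ge>0. \<forall>f\<in>B_rho rhoN. Pop \<alpha> (t + s) f = Pop \<alpha> s (Pop \<alpha> t f)"
    using Pop_semigroup by blast
  show "\<forall>f\<in>B_rho rhoN. \<forall>x. ((\<lambda>t. Pop \<alpha> t f x) \<longlongrightarrow> f x) (at_right 0)"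
    using Pop_cont by blast
  show "\<forall>t\<ge>0. \<forall>f\<in>B_rho rhoN. (\<forall>x. f x \<ge> 0) \<longrightarrow> (\<forall>x. Pop \<alpha> t f x \<ge> 0)"
    using Pop_pos by blast
  show "((\<lambda>t. op_norm_rho rhoN (Pop \<alpha> t)) \<longlongrightarrow> \<infinity>) (at_right 0)"
    by (rule op_norm_infty[OF assms])
  show "\<not> (\<exists>\<epsilon>>0. \<exists>C::real. \<forall>t\<in>{0..\<epsilon>}. op_norm_rho rhoN (Pop \<alpha> t) \<le> ereal C)"
    by (rule not_P4[OF assms])
  show "\<not> (\<forall>f\<in>B_rho rhoN. ((\<lambda>t. rho_norm rhoN (\<lambda>x. Pop \<alpha> t f x - f x)) \<longlongrightarrow> 0) (at_right 0))"
    by (rule not_strong[OF assms])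
qed

end
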